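(* For all integers $i\ge1$ and $0\le j<i$ there is a constant $C$ (independent of $n$ and of the sequences) such that for every $n$ and every pair of sequences $\eta,\dot\eta$ as below, $\lVert\eta\rVert^2_{i-j,i}\le Ce_{i+j-1}$, $\lVert\dot\eta\rVert^2_{i-j,i}\le Ce_{i+j}$, $\lvert\eta\rvert^2_{\infty;i-j,i}\le Ce_{i+j}$, $\lvert\dot\eta\rvert^2_{\infty;i-j,i}\le Ce_{i+j+1}$, and $\lvert\dot\eta\rvert^2_{\infty;1/2,i}\le Ce_{2i+1}$.
   Context: Fix $n$. $\eta_k,\dot\eta_k\in\mathbb{R}^d$ for $1\le k\le n+1$ with $\eta_{n+1}=\dot\eta_{n+1}=0$, extended for $k>n+1$ by $\eta_k=-\eta_{2n+2-k}$, $\dot\eta_k=-\dot\eta_{2n+2-k}$. $(\nabla_+f)_k=n(f_{k+1}-f_k)$; $s_k^{(r)}=\frac{\Gamma(k+r)}{n^r\Gamma(k)}$. Seminorms: $\lVert\eta\rVert^2_{r,m}=\frac1n\sum_{k=1}^{n-m+1}s_k^{(r)}\lvert(\nabla_+^m\eta)_k\rvert^2$, $\lvert\eta\rvert^2_{\infty;r,m}=\max_{1\le k\le n-m+1}s_k^{(r)}\lvert(\nabla_+^m\eta)_k\rvert^2$, same for $\dot\eta$. Energy: $e_m=\frac1n\sum_{\ell=0}^m\sum_{k=1}^{n-\lfloor\ell/2\rfloor}\big(s_k^{(\ell)}\lvert(\nabla_+^\ell\dot\eta)_k\rvert^2+s_k^{(\ell+1)}\lvert(\nabla_+^{\ell+1}\eta)_k\rvert^2\big)$.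 *)

theory Defs
  imports "HOL-Analysis.Analysis"
begin

text \<open>Sequences are functions nat => 'a (index 0 unused). Forward difference
  (nabla_+ f)_k = n (f_{k+1} - f_k).\<close>
definition fwd :: "nat \<Rightarrow> (nat \<Rightarrow> 'a::real_normed_vector) \<Rightarrow> nat \<Rightarrow> 'a" where
  "fwd n f = (\<lambda>k. real n *\<^sub>R (f (Suc k) - f k))"

definition fwdpow :: "nat \<Rightarrow> nat \<Rightarrow> (nat \<Rightarrow> 'a::real_normed_vector) \<Rightarrow> nat \<Rightarrow> 'a" where
  "fwdpow n m f = (fwd n ^^ m) f"

definition sw :: "nat \<Rightarrow> real \<Rightarrow> nat \<Rightarrow> real" where
  "sw n r k = Gamma (real k + r) / (real n powr r * Gamma (real k))"

text \<open>Squared seminorm ||f||^2_{r,m}; the index range 1..n-m+1 is empty when m > n.\<close>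
definition snorm2 :: "nat \<Rightarrow> real \<Rightarrow> nat \<Rightarrow> (nat \<Rightarrow> 'a::real_normed_vector) \<Rightarrow> real" where
  "snorm2 n r m f = (1 / real n) * (\<Sum>k\<in>{1..n+1-m}. sw n r k * (norm (fwdpow n m f k))\<^sup>2)"

definition supnorm2 :: "nat \<Rightarrow> real \<Rightarrow> nat \<Rightarrow> (nat \<Rightarrow> 'a::real_normed_vector) \<Rightarrow> real" where
  "supnorm2 n r m f = (if {1..n+1-m} = {} then 0
     else Max ((\<lambda>k. sw n r k * (norm (fwdpow n m f k))\<^sup>2) ` {1..n+1-m}))"

definition energy :: "nat \<Rightarrow> nat \<Rightarrow> (nat \<Rightarrow> 'a::real_normed_vector) \<Rightarrow> (nat \<Rightarrow> 'a) \<Rightarrow> real" where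
  "energy n m eta etad = (1 / real n) * (\<Sum>l\<le>m. \<Sum>k\<in>{1..n - l div 2}.
      sw n (real l) k * (norm (fwdpow n l etad k))\<^sup>2
    + sw n (real l + 1) k * (norm (fwdpow n (Suc l) eta k))\<^sup>2)"

text \<open>Admissible sequence: f_{n+1} = 0 and odd reflection f_k = - f_{2n+2-k}
  for n+1 < k <= 2n+1 (the range where the reflection is meaningful).
  Values at indices > 2n+1 are left unconstrained.\<close>
definition admissible :: "nat \<Rightarrow> (nat \<Rightarrow> 'a::real_normed_vector) \<Rightarrow> bool" where
  "admissible n f \<longleftrightarrow> f (n+1) = 0 \<and>
     (\<forall>k. n + 1 < k \<and> k \<le> 2*n + 1 \<longrightarrow> f k = - f (2*n + 2 - k))"

end

theory Submission
  imports Defs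
begin


lemma sw_nat:
  assumes n: "n \<ge> 1" and k: "k \<ge> 1"
  shows "sw n (real r) k = pochhammer (real k) r / real n ^ r"
proof -
  have "real k \<notin> \<int>\<^sub>\<le>\<^sub>0" using k by (auto simp: nonpos_Ints_def)
  then have "pochhammer (real k) r = Gamma (real k + real r) / Gamma (real k)"
    by (simp add: pochhammer_Gamma)
  moreover have "real n powr real r = real n ^ r" using n by (simp add: powr_realpow)
  ultimately show ?thesis unfolding sw_def by (simp add: field_simps)
qed

lemma poch_lower: "k \<ge> 1 \<Longrightarrow> real k ^ r \<le> pochhammer (real k) r"
proof (induction r)
  case 0 then show ?case by simp
next
  case (Suc r)
  have "real k ^ Suc r = real k ^ r * real k" by simp
  also have "\<dots> \<le> pochhammer (real k) r * (real k + real r)"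
    using Suc by (intro mult_mono) (auto intro!: pochhammer_nonneg)
  also have "\<dots> = pochhammer (real k) (Suc r)" by (simp add: pochhammer_rec' mult.commute)
  finally show ?case .
qed

lemma poch_upper: "k \<ge> 1 \<Longrightarrow> pochhammer (real k) r \<le> fact r * real k ^ r"
proof (induction r)
  case 0 then show ?case by simp
next
  case (Suc r)
  have "real k + real r \<le> real (Suc r) * real k" using Suc.prems
  proof -
    have "real r * 1 \<le> real r * real k" using Suc.prems by (intro mult_left_mono) auto
    then show ?thesis by (simp add: algebra_simps)
  qed
  then have "pochhammer (real k) r * (real k + real r) \<le> (fact r * real k ^ r) * (real (Suc r) * real k)"
    using Suc by (intro mult_mono) (auto intro: pochhammer_nonneg)
  then show ?case by (simp add: pochhammer_rec' algebra_simps)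
qed

lemma sw_nat_bounds:
  assumes n: "n \<ge> 1" and k: "k \<ge> 1"
  shows "(real k / real n) ^ r \<le> sw n (real r) k"
    and "sw n (real r) k \<le> fact r * (real k / real n) ^ r"
  using poch_lower[OF k, of r] poch_upper[OF k, of r] n
  by (auto simp: sw_nat[OF n k] power_divide divide_right_mono)

lemma sw_half:
  assumes n: "n \<ge> 1" and k: "k \<ge> 1"
  shows "sw n (1/2) k \<le> sqrt (real k / real n)"
proof -
  define x where "x = real k"
  have x: "x \<ge> 1" using k by (simp add: x_def)
  have cv: "(ln \<circ> Gamma) ((1 - 1/2) *\<^sub>R x + (1/2) *\<^sub>R (x+1)) \<le> (1 - 1/2) * (ln \<circ> Gamma) x + (1/2) * (ln \<circ> Gamma) (x+1)"
    by (rule convex_onD[OF log_convex_Gamma_real]) (use x in auto)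
  have e: "(1 - 1/2) *\<^sub>R x + (1/2) *\<^sub>R (x+1) = x + 1/2" by (simp add: field_simps)
  have gp: "Gamma (x+1) = x * Gamma x" using x by (intro Gamma_plus1) (auto simp: nonpos_Ints_def)
  have g0: "Gamma x > 0" "Gamma (x + 1/2) > 0" using x by auto
  have "ln (Gamma (x + 1/2)) \<le> (ln (Gamma x) + ln (x * Gamma x)) / 2"
    using cv unfolding e by (simp add: gp)
  also have "\<dots> = ln (sqrt x * Gamma x)" using g0 x
    by (simp add: ln_mult ln_sqrt)
  finally have "Gamma (x + 1/2) \<le> sqrt x * Gamma x" using g0 x by simp
  moreover have "real n powr (1/2) = sqrt (real n)" using n by (simp add: powr_half_sqrt)
  ultimately show ?thesis unfolding sw_def x_def[symmetric] using g0 n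
    by (simp add: field_simps real_sqrt_divide)
qed


lemma abel_sum:
  fixes F U :: "nat \<Rightarrow> real"
  shows "(\<Sum>k\<in>{1..Suc N}. (F k - F (k-1)) * U k)
       = F (Suc N) * U (Suc N) - F 0 * U 1 + (\<Sum>k\<in>{1..N}. F k * (U k - U (Suc k)))"
proof (induction N)
  case 0 then show ?case by (simp add: algebra_simps)
next
  case (Suc N)
  have "(\<Sum>k\<in>{1..Suc (Suc N)}. (F k - F (k-1)) * U k)
      = (\<Sum>k\<in>{1..Suc N}. (F k - F (k-1)) * U k) + (F (Suc (Suc N)) - F (Suc N)) * U (Suc (Suc N))"
    by simp
  also have "\<dots> = F (Suc (Suc N)) * U (Suc (Suc N)) - F 0 * U 1 + (\<Sum>k\<in>{1..Suc N}. F k * (U k - U (Suc k)))"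
    unfolding Suc by (simp add: algebra_simps)
  finally show ?case .
qed

lemma amgm_weighted:
  fixes F d u A C D :: real
  assumes "A > 0" "F\<^sup>2 \<le> C * A * D" "d \<ge> 0" "u \<ge> 0" "F \<ge> 0"
  shows "F * d * u \<le> A * u\<^sup>2 / 4 + C * D * d\<^sup>2"
proof -
  have "A * (F * d * u) \<le> (A * u)\<^sup>2 / 4 + (F * d)\<^sup>2"
    using sum_squares_ge_zero[of "A*u/2 - F*d" 0] by (simp add: power2_eq_square algebra_simps)
  also have "(F * d)\<^sup>2 \<le> C * A * D * d\<^sup>2"
    using assms by (simp add: power_mult_distrib mult_right_mono)
  finally have "A * (F * d * u) \<le> A * (A * u\<^sup>2 / 4 + C * D * d\<^sup>2)"
    by (simp add: power2_eq_square algebra_simps)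
  then show ?thesis using assms(1) by simp
qed

lemma hardy_point:
  fixes F d u v A A' C D :: real
  assumes "A > 0" "A' > 0" "F\<^sup>2 \<le> C * A * D" "F\<^sup>2 \<le> C * A' * D" "d \<ge> 0" "u \<ge> 0" "v \<ge> 0"
    "F \<ge> 0" "\<bar>v - u\<bar> \<le> d"
  shows "F * (u\<^sup>2 - v\<^sup>2) \<le> A * u\<^sup>2 / 4 + A' * v\<^sup>2 / 4 + 2 * C * D * d\<^sup>2"
proof -
  have "u\<^sup>2 - v\<^sup>2 = (u - v) * (u + v)" by (simp add: power2_eq_square algebra_simps)
  also have "\<dots> \<le> d * (u + v)" using assms by (intro mult_right_mono) auto
  finally have "F * (u\<^sup>2 - v\<^sup>2) \<le> F * d * u + F * d * v"
    using assms(8) by (metis distrib_left mult.assoc mult_left_mono)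
  also have "\<dots> \<le> (A * u\<^sup>2 / 4 + C * D * d\<^sup>2) + (A' * v\<^sup>2 / 4 + C * D * d\<^sup>2)"
    using amgm_weighted[of A F C D d u] amgm_weighted[of A' F C D d v] assms by (intro add_mono) auto
  finally show ?thesis by simp
qed

lemma sum_shift_le:
  fixes g :: "nat \<Rightarrow> real"
  assumes "\<And>k. k \<ge> 1 \<Longrightarrow> k \<le> Suc N \<Longrightarrow> g k \<ge> 0"
  shows "(\<Sum>k\<in>{1..N}. g (Suc k)) \<le> (\<Sum>k\<in>{1..Suc N}. g k)"
proof -
  have "(\<Sum>k\<in>{1..N}. g (Suc k)) = (\<Sum>k\<in>{2..Suc N}. g k)"
    using sum.shift_bounds_cl_Suc_ivl[of g 1 N] by (simp add: numeral_2_eq_2)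
  also have "\<dots> \<le> (\<Sum>k\<in>{1..Suc N}. g k)"
    by (intro sum_mono2) (auto intro: assms)
  finally show ?thesis .
qed

lemma sum_le_Suc:
  fixes g :: "nat \<Rightarrow> real"
  assumes "\<And>k. k \<ge> 1 \<Longrightarrow> k \<le> Suc N \<Longrightarrow> g k \<ge> 0"
  shows "(\<Sum>k\<in>{1..N}. g k) \<le> (\<Sum>k\<in>{1..Suc N}. g k)"
  by (intro sum_mono2) (auto intro: assms)

lemma hardy_abs:
  fixes u d A B D F :: "nat \<Rightarrow> real" and K C :: real
  assumes L: "L \<ge> 1"
    and ud: "\<And>k. 1 \<le> k \<Longrightarrow> k < L \<Longrightarrow> \<bar>u (Suc k) - u k\<bar> \<le> d k"
    and u0: "\<And>k. u k \<ge> 0" and d0: "\<And>k. d k \<ge> 0"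
    and F0: "F 0 \<ge> 0" and FL: "F L \<le> 0"
    and Fi: "\<And>k. 1 \<le> k \<Longrightarrow> k \<le> L \<Longrightarrow> A k - K * B k \<le> F k - F (k-1)"
    and Ap: "\<And>k. 1 \<le> k \<Longrightarrow> k \<le> L \<Longrightarrow> A k > 0"
    and Fii: "\<And>k. 1 \<le> k \<Longrightarrow> k < L \<Longrightarrow> F k \<ge> 0 \<and> (F k)\<^sup>2 \<le> C * A k * D k \<and> (F k)\<^sup>2 \<le> C * A (Suc k) * D k"
  shows "(\<Sum>k\<in>{1..L}. A k * (u k)\<^sup>2) \<le> 2 * K * (\<Sum>k\<in>{1..L}. B k * (u k)\<^sup>2) + 4 * C * (\<Sum>k\<in>{1..L-1}. D k * (d k)\<^sup>2)"
proof -
  obtain N where N: "L = Suc N" using L by (cases L) auto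
  let ?U = "\<lambda>k. (u k)\<^sup>2"
  have "(\<Sum>k\<in>{1..L}. A k * ?U k) - K * (\<Sum>k\<in>{1..L}. B k * ?U k) = (\<Sum>k\<in>{1..L}. (A k - K * B k) * ?U k)"
    by (simp add: sum_distrib_left sum_subtractf algebra_simps)
  also have "\<dots> \<le> (\<Sum>k\<in>{1..L}. (F k - F (k-1)) * ?U k)"
  proof (intro sum_mono mult_right_mono)
    fix k assume "k \<in> {1..L}"
    then show "A k - K * B k \<le> F k - F (k-1)" using Fi by auto
  qed auto
  also have "\<dots> = F L * ?U L - F 0 * ?U 1 + (\<Sum>k\<in>{1..N}. F k * (?U k - ?U (Suc k)))"
    unfolding N by (rule abel_sum)
  also have "\<dots> \<le> (\<Sum>k\<in>{1..N}. F k * (?U k - ?U (Suc k)))"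
  proof -
    have "F L * ?U L \<le> 0" using FL by (simp add: mult_nonpos_nonneg)
    moreover have "F 0 * ?U 1 \<ge> 0" using F0 by simp
    ultimately show ?thesis by simp
  qed
  also have "\<dots> \<le> (\<Sum>k\<in>{1..N}. A k * ?U k / 4 + A (Suc k) * ?U (Suc k) / 4 + 2 * C * D k * (d k)\<^sup>2)"
  proof (intro sum_mono)
    fix k assume k: "k \<in> {1..N}"
    show "F k * (?U k - ?U (Suc k)) \<le> A k * ?U k / 4 + A (Suc k) * ?U (Suc k) / 4 + 2 * C * D k * (d k)\<^sup>2"
      using k N Fii[of k] Ap[of k] Ap[of "Suc k"] ud[of k] u0 d0
      by (intro hardy_point) auto
  qed
  also have "\<dots> = (\<Sum>k\<in>{1..N}. A k * ?U k) / 4 + (\<Sum>k\<in>{1..N}. A (Suc k) * ?U (Suc k)) / 4 + 2 * C * (\<Sum>k\<in>{1..N}. D k * (d k)\<^sup>2)"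
    by (simp add: sum.distrib sum_divide_distrib sum_distrib_left algebra_simps)
  also have "\<dots> \<le> (\<Sum>k\<in>{1..L}. A k * ?U k) / 4 + (\<Sum>k\<in>{1..L}. A k * ?U k) / 4 + 2 * C * (\<Sum>k\<in>{1..N}. D k * (d k)\<^sup>2)"
  proof -
    have h: "\<And>k. k \<ge> 1 \<Longrightarrow> k \<le> Suc N \<Longrightarrow> A k * ?U k \<ge> 0" using Ap N by (simp add: less_imp_le)
    have "(\<Sum>k\<in>{1..N}. A k * ?U k) \<le> (\<Sum>k\<in>{1..L}. A k * ?U k)"
      using sum_le_Suc[of N "\<lambda>k. A k * ?U k", OF h] unfolding N by simp
    moreover have "(\<Sum>k\<in>{1..N}. A (Suc k) * ?U (Suc k)) \<le> (\<Sum>k\<in>{1..L}. A k * ?U k)"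
      using sum_shift_le[of N "\<lambda>k. A k * ?U k", OF h] unfolding N by simp
    ultimately show ?thesis by simp
  qed
  finally have fin: "(\<Sum>k\<in>{1..L}. A k * ?U k) - K * (\<Sum>k\<in>{1..L}. B k * ?U k) \<le> (\<Sum>k\<in>{1..L}. A k * ?U k) / 4 + (\<Sum>k\<in>{1..L}. A k * ?U k) / 4 + 2 * C * (\<Sum>k\<in>{1..N}. D k * (d k)\<^sup>2)" .
  have "L - 1 = N" using N by simp
  then show ?thesis using fin by (simp only:)
qed

lemma var_bound:
  fixes V :: "nat \<Rightarrow> real"
  assumes "k \<le> p"
  shows "\<bar>V p - V k\<bar> \<le> (\<Sum>l\<in>{k..<p}. \<bar>V (Suc l) - V l\<bar>)"
  using assms
proof (induction p)
  case 0 then show ?case by simp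
next
  case (Suc p)
  show ?case
  proof (cases "k = Suc p")
    case True then show ?thesis by simp
  next
    case False
    then have kp: "k \<le> p" using Suc.prems by simp
    have "\<bar>V (Suc p) - V k\<bar> \<le> \<bar>V (Suc p) - V p\<bar> + \<bar>V p - V k\<bar>" by simp
    also have "\<dots> \<le> \<bar>V (Suc p) - V p\<bar> + (\<Sum>l\<in>{k..<p}. \<bar>V (Suc l) - V l\<bar>)"
      using Suc.IH[OF kp] by simp
    finally show ?thesis using kp by simp
  qed
qed

lemma sup_by_mean:
  fixes V :: "nat \<Rightarrow> real"
  assumes L: "L \<ge> 1" and k: "1 \<le> k" "k \<le> L"
  shows "V k \<le> (\<Sum>p\<in>{1..L}. V p) / real L + (\<Sum>l\<in>{1..L-1}. \<bar>V (Suc l) - V l\<bar>)"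
proof -
  let ?T = "\<Sum>l\<in>{1..L-1}. \<bar>V (Suc l) - V l\<bar>"
  have each: "V k \<le> V p + ?T" if p: "1 \<le> p" "p \<le> L" for p
  proof (cases "k \<le> p")
    case True
    have "\<bar>V p - V k\<bar> \<le> (\<Sum>l\<in>{k..<p}. \<bar>V (Suc l) - V l\<bar>)" by (rule var_bound[OF True])
    also have "\<dots> \<le> ?T" using k p by (intro sum_mono2) auto
    finally show ?thesis by simp
  next
    case False
    have "\<bar>V k - V p\<bar> \<le> (\<Sum>l\<in>{p..<k}. \<bar>V (Suc l) - V l\<bar>)" using False by (intro var_bound) simp
    also have "\<dots> \<le> ?T" using k p by (intro sum_mono2) auto
    finally show ?thesis by simp
  qed
  have "(\<Sum>p\<in>{1..L}. V k) \<le> (\<Sum>p\<in>{1..L}. V p + ?T)" by (intro sum_mono each) auto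
  then have "real L * V k \<le> (\<Sum>p\<in>{1..L}. V p) + real L * ?T" by (simp add: sum.distrib)
  then show ?thesis using L by (simp add: field_simps)
qed

lemma sup_abs:
  fixes u d W G E :: "nat \<Rightarrow> real" and C :: real
  assumes L: "L \<ge> 1" and k: "1 \<le> k" "k \<le> L"
    and ud: "\<And>l. 1 \<le> l \<Longrightarrow> l < L \<Longrightarrow> \<bar>u (Suc l) - u l\<bar> \<le> d l"
    and u0: "\<And>l. u l \<ge> 0" and d0: "\<And>l. d l \<ge> 0" and C0: "C \<ge> 0"
    and Gp: "\<And>l. 1 \<le> l \<Longrightarrow> l \<le> L \<Longrightarrow> G l > 0"
    and W0: "\<And>l. W l \<ge> 0"
    and Wc: "\<And>l. 1 \<le> l \<Longrightarrow> l < L \<Longrightarrow> (W l)\<^sup>2 \<le> C * G l * E l \<and> (W l)\<^sup>2 \<le> C * G (Suc l) * E l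
              \<and> \<bar>W (Suc l) - W l\<bar> \<le> C * G (Suc l)"
  shows "W k * (u k)\<^sup>2 \<le> (\<Sum>l\<in>{1..L}. W l * (u l)\<^sup>2) / real L + (C + 2) * (\<Sum>l\<in>{1..L}. G l * (u l)\<^sup>2)
      + 2 * C * (\<Sum>l\<in>{1..L-1}. E l * (d l)\<^sup>2)"
proof -
  obtain N where N: "L = Suc N" using L by (cases L) auto
  let ?V = "\<lambda>l. W l * (u l)\<^sup>2"
  have "?V k \<le> (\<Sum>l\<in>{1..L}. ?V l) / real L + (\<Sum>l\<in>{1..L-1}. \<bar>?V (Suc l) - ?V l\<bar>)"
    by (rule sup_by_mean[OF L k])
  also have "(\<Sum>l\<in>{1..L-1}. \<bar>?V (Suc l) - ?V l\<bar>) \<le>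
     (\<Sum>l\<in>{1..N}. (C + 1) * (G (Suc l) * (u (Suc l))\<^sup>2) + G l * (u l)\<^sup>2 + 2 * C * (E l * (d l)\<^sup>2))"
  proof (unfold N, simp only: diff_Suc_1, intro sum_mono)
    fix l assume l: "l \<in> {1..N}"
    have lL: "1 \<le> l" "l < L" using l N by auto
    note w = Wc[OF lL]
    have G1: "G l > 0" "G (Suc l) > 0" using Gp lL by auto
    have "?V (Suc l) - ?V l = (W (Suc l) - W l) * (u (Suc l))\<^sup>2 + W l * ((u (Suc l))\<^sup>2 - (u l)\<^sup>2)"
      by (simp add: algebra_simps)
    then have t1: "\<bar>?V (Suc l) - ?V l\<bar> \<le> \<bar>(W (Suc l) - W l) * (u (Suc l))\<^sup>2\<bar> + \<bar>W l * ((u (Suc l))\<^sup>2 - (u l)\<^sup>2)\<bar>"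
      by (metis abs_triangle_ineq)
    have t2: "\<bar>(W (Suc l) - W l) * (u (Suc l))\<^sup>2\<bar> + \<bar>W l * ((u (Suc l))\<^sup>2 - (u l)\<^sup>2)\<bar> = \<bar>W (Suc l) - W l\<bar> * (u (Suc l))\<^sup>2 + W l * \<bar>(u (Suc l))\<^sup>2 - (u l)\<^sup>2\<bar>"
      using W0[of l] by (simp add: abs_mult)
    have t3: "\<bar>(u (Suc l))\<^sup>2 - (u l)\<^sup>2\<bar> \<le> d l * (u l + u (Suc l))"
    proof -
      have "(u (Suc l))\<^sup>2 - (u l)\<^sup>2 = (u (Suc l) - u l) * (u l + u (Suc l))"
        by (simp add: power2_eq_square algebra_simps)
      then have "\<bar>(u (Suc l))\<^sup>2 - (u l)\<^sup>2\<bar> = \<bar>u (Suc l) - u l\<bar> * (u l + u (Suc l))"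
        using u0[of l] u0[of "Suc l"] by (simp add: abs_mult)
      also have "\<dots> \<le> d l * (u l + u (Suc l))"
        using ud[OF lL] u0[of l] u0[of "Suc l"] by (intro mult_right_mono) auto
      finally show ?thesis .
    qed
    have t4: "W l * \<bar>(u (Suc l))\<^sup>2 - (u l)\<^sup>2\<bar> \<le> W l * d l * u l + W l * d l * u (Suc l)"
      using mult_left_mono[OF t3 W0[of l]] by (simp add: algebra_simps)
    have a: "\<bar>W (Suc l) - W l\<bar> * (u (Suc l))\<^sup>2 \<le> C * G (Suc l) * (u (Suc l))\<^sup>2"
      using w by (intro mult_right_mono) auto
    have b: "W l * d l * u l \<le> G l * (u l)\<^sup>2 / 4 + C * E l * (d l)\<^sup>2"
      using amgm_weighted[of "G l" "W l" C "E l" "d l" "u l"] G1 w d0 u0 W0 by auto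
    have c: "W l * d l * u (Suc l) \<le> G (Suc l) * (u (Suc l))\<^sup>2 / 4 + C * E l * (d l)\<^sup>2"
      using amgm_weighted[of "G (Suc l)" "W l" C "E l" "d l" "u (Suc l)"] G1 w d0 u0 W0 by auto
    have e: "G l * (u l)\<^sup>2 / 4 \<le> G l * (u l)\<^sup>2" "G (Suc l) * (u (Suc l))\<^sup>2 / 4 \<le> G (Suc l) * (u (Suc l))\<^sup>2"
      using G1 by auto
    show "\<bar>?V (Suc l) - ?V l\<bar> \<le> (C + 1) * (G (Suc l) * (u (Suc l))\<^sup>2) + G l * (u l)\<^sup>2 + 2 * C * (E l * (d l)\<^sup>2)"
      using t1 t2 t4 a b c e by (simp add: algebra_simps)
  qed
  also have "(\<Sum>l\<in>{1..N}. (C + 1) * (G (Suc l) * (u (Suc l))\<^sup>2) + G l * (u l)\<^sup>2 + 2 * C * (E l * (d l)\<^sup>2))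
     = (C + 1) * (\<Sum>l\<in>{1..N}. G (Suc l) * (u (Suc l))\<^sup>2) + (\<Sum>l\<in>{1..N}. G l * (u l)\<^sup>2) + 2 * C * (\<Sum>l\<in>{1..N}. E l * (d l)\<^sup>2)"
    by (simp add: sum.distrib sum_distrib_left)
  also have "\<dots> \<le> (C + 1) * (\<Sum>l\<in>{1..L}. G l * (u l)\<^sup>2) + (\<Sum>l\<in>{1..L}. G l * (u l)\<^sup>2) + 2 * C * (\<Sum>l\<in>{1..N}. E l * (d l)\<^sup>2)"
  proof -
    have h: "\<And>k. k \<ge> 1 \<Longrightarrow> k \<le> Suc N \<Longrightarrow> G k * (u k)\<^sup>2 \<ge> 0" using Gp N by (simp add: less_imp_le)
    have "(\<Sum>k\<in>{1..N}. G k * (u k)\<^sup>2) \<le> (\<Sum>k\<in>{1..L}. G k * (u k)\<^sup>2)"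
      using sum_le_Suc[of N "\<lambda>k. G k * (u k)\<^sup>2", OF h] unfolding N by simp
    moreover have "(\<Sum>k\<in>{1..N}. G (Suc k) * (u (Suc k))\<^sup>2) \<le> (\<Sum>k\<in>{1..L}. G k * (u k)\<^sup>2)"
      using sum_shift_le[of N "\<lambda>k. G k * (u k)\<^sup>2", OF h] unfolding N by simp
    ultimately show ?thesis using C0 by (intro add_mono mult_left_mono) auto
  qed
  finally show ?thesis using N by (simp add: algebra_simps)
qed



definition Q :: "nat \<Rightarrow> nat \<Rightarrow> nat \<Rightarrow> (nat \<Rightarrow> 'a::real_normed_vector) \<Rightarrow> real" where
  "Q n a m f = (1 / real n) * (\<Sum>k\<in>{1..n+1-m}. (real k / real n) ^ a * (norm (fwdpow n m f k))\<^sup>2)"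

definition QH :: "nat \<Rightarrow> nat \<Rightarrow> (nat \<Rightarrow> 'a::real_normed_vector) \<Rightarrow> real" where
  "QH n m f = (1 / real n) * (\<Sum>k\<in>{1..n+1-m}. (1 / sqrt (real k / real n)) * (norm (fwdpow n m f k))\<^sup>2)"

lemma Q_nonneg: "Q n a m f \<ge> 0"
  unfolding Q_def by (intro mult_nonneg_nonneg sum_nonneg) auto

lemma QH_nonneg: "QH n m f \<ge> 0"
  unfolding QH_def by (intro mult_nonneg_nonneg sum_nonneg) auto

lemma fwdpow_Suc: "fwdpow n (Suc m) f k = real n *\<^sub>R (fwdpow n m f (Suc k) - fwdpow n m f k)"
  by (simp add: fwdpow_def fwd_def)

lemma ud_level:
  assumes "n \<ge> 1"
  shows "\<bar>norm (fwdpow n m f (Suc k)) - norm (fwdpow n m f k)\<bar> \<le> norm (fwdpow n (Suc m) f k) / real n"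
proof -
  have "norm (fwdpow n (Suc m) f k) / real n = norm (fwdpow n m f (Suc k) - fwdpow n m f k)"
    using assms by (simp add: fwdpow_Suc)
  then show ?thesis by (simp add: norm_triangle_ineq3)
qed

lemma nML: "n + 1 - m \<ge> 1 \<Longrightarrow> real n \<le> real (m+1) * real (n + 1 - m)"
proof -
  assume h: "n + 1 - m \<ge> 1"
  have "n \<le> (m+1) * (n + 1 - m)"
  proof -
    obtain t where t: "n + 1 - m = Suc t" using h by (cases "n+1-m") auto
    then have "n = t + m" by simp
    then show ?thesis using t by (simp add: algebra_simps)
  qed
  then show ?thesis by (metis of_nat_le_iff of_nat_mult)
qed

lemma hardy_nat_step:
  fixes a :: nat and n L k M :: real
  assumes n: "n > 0" and k: "1 \<le> k" "k \<le> L" and nM: "n \<le> M * L"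
  shows "(k/n)^a/n - 2*M*((k/n)^(a+1)/n) \<le> (k/n)^(a+1)*(1-k/L) - ((k-1)/n)^(a+1)*(1-(k-1)/L)"
proof -
  define x where "x = k/n"
  define y where "y = (k-1)/n"
  define P where "P = x^a"
  have L0: "L > 0" using k by simp
  have y0: "0 \<le> y" "y \<le> x" using k n by (auto simp: x_def y_def divide_right_mono)
  have P0: "P \<ge> 0" using y0 by (simp add: P_def)
  have c1: "1 - (k-1)/L \<ge> 0" using k L0 by (simp add: field_simps)
  have Y: "y^(a+1) \<le> y * P" unfolding P_def using y0 by (simp add: mult_left_mono power_mono)
  have "y^(a+1) * (1-(k-1)/L) \<le> y * P * (1-(k-1)/L)" using Y c1 by (rule mult_right_mono)
  then have "x * P * (1-k/L) - y * P * (1-(k-1)/L) \<le> x * P * (1-k/L) - y^(a+1) * (1-(k-1)/L)" by simp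
  moreover have e: "x * P * (1-k/L) - y * P * (1-(k-1)/L) = P * (1/n - (k/n + y)/L)"
    using n L0 by (simp add: x_def y_def field_simps)
  moreover have "1/n - (k/n + y)/L \<ge> 1/n - 2*M*x/n"
  proof -
    have "k/n + y \<le> 2*x" using y0 by (simp add: x_def)
    then have "(k/n + y)/L \<le> 2*x/L" using L0 by (simp add: divide_right_mono)
    also have "2*x/L \<le> 2*M*x/n"
    proof -
      have "2*x*n \<le> 2*x*(M*L)" using nM y0 by (intro mult_left_mono) auto
      then show ?thesis using n L0 by (simp add: field_simps)
    qed
    finally show ?thesis by simp
  qed
  then have "P * (1/n - 2*M*x/n) \<le> P * (1/n - (k/n + y)/L)" using P0 by (rule mult_left_mono)
  ultimately have H: "P * (1/n - 2*M*x/n) \<le> x * P * (1-k/L) - y^(a+1) * (1-(k-1)/L)" by linarith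
  have eq1: "(k/n)^a/n - 2*M*((k/n)^(a+1)/n) = P * (1/n - 2*M*x/n)"
    using n by (simp add: P_def x_def field_simps)
  have eq2: "(k/n)^(a+1)*(1-k/L) = x * P * (1-k/L)" by (simp add: P_def x_def)
  have eq3: "((k-1)/n)^(a+1)*(1-(k-1)/L) = y^(a+1) * (1-(k-1)/L)" by (simp add: y_def)
  show ?thesis using H eq1 eq2 eq3 by linarith
qed

lemma hardy_nat:
  assumes n: "n \<ge> 1"
  shows "Q n a m f \<le> 4 * real (m+1) * Q n (a+1) m f + 4 * Q n (a+2) (Suc m) f"
proof (cases "n + 1 - m \<ge> 1")
  case False
  then have "n + 1 - m = 0" by simp
  then have "Q n a m f = 0" by (simp add: Q_def)
  then show ?thesis using Q_nonneg[of n "a+1" m f] Q_nonneg[of n "a+2" "Suc m" f] by simp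
next
  case True
  define L where "L = n + 1 - m"
  have L1: "L \<ge> 1" using True by (simp add: L_def)
  define u where "u k = norm (fwdpow n m f k)" for k
  define d where "d k = norm (fwdpow n (Suc m) f k) / real n" for k
  define A where "A k = (real k / real n)^a / real n" for k
  define B where "B k = (real k / real n)^(a+1) / real n" for k
  define D where "D k = real n * (real k / real n)^(a+2)" for k
  define F where "F k = (real k / real n)^(a+1) * (1 - real k / real L)" for k
  define M where "M = real (m+1)"
  have n0: "real n > 0" using n by simp
  have nM: "real n \<le> M * real L" using nML[OF True] by (simp add: M_def L_def)
  have main: "(\<Sum>k\<in>{1..L}. A k * (u k)\<^sup>2) \<le> 2 * (2*M) * (\<Sum>k\<in>{1..L}. B k * (u k)\<^sup>2) + 4 * 1 * (\<Sum>k\<in>{1..L-1}. D k * (d k)\<^sup>2)"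
  proof (rule hardy_abs[OF L1])
    show "\<bar>u (Suc k) - u k\<bar> \<le> d k" for k unfolding u_def d_def using ud_level[OF n] .
    show "u k \<ge> 0" for k by (simp add: u_def)
    show "d k \<ge> 0" for k by (simp add: d_def)
    show "F 0 \<ge> 0" by (simp add: F_def)
    show "F L \<le> 0" using L1 by (simp add: F_def)
    show "A k - 2*M * B k \<le> F k - F (k-1)" if "1 \<le> k" "k \<le> L" for k
    proof -
      have rk: "real (k-1) = real k - 1" using that by simp
      show ?thesis unfolding A_def B_def F_def rk
        using hardy_nat_step[of "real n" "real k" "real L" M a] that n0 nM by simp
    qed
    show "A k > 0" if "1 \<le> k" "k \<le> L" for k using that n0 by (simp add: A_def)
    show "F k \<ge> 0 \<and> (F k)\<^sup>2 \<le> 1 * A k * D k \<and> (F k)\<^sup>2 \<le> 1 * A (Suc k) * D k" if "1 \<le> k" "k < L" for k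
    proof -
      define x where "x = real k / real n"
      define x' where "x' = real (Suc k) / real n"
      have x0: "0 \<le> x" "x \<le> x'" using n0 by (auto simp: x_def x'_def divide_right_mono)
      have c: "0 \<le> 1 - real k / real L" "1 - real k / real L \<le> 1" using that by auto
      have F0: "F k \<ge> 0" using c x0 by (simp add: F_def x_def[symmetric])
      have "(F k)\<^sup>2 \<le> (x^(a+1))\<^sup>2"
        unfolding F_def x_def[symmetric] using c x0
        by (intro power_mono) (auto intro: mult_left_le)
      also have "\<dots> = A k * D k" using n0 by (simp add: A_def D_def x_def[symmetric] power2_eq_square power_add)
      finally have f1: "(F k)\<^sup>2 \<le> A k * D k" .
      have "A k * D k \<le> A (Suc k) * D k"
        unfolding A_def D_def x_def[symmetric] x'_def[symmetric] using x0 n0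
        by (intro mult_right_mono divide_right_mono power_mono) auto
      then show ?thesis using F0 f1 by simp
    qed
  qed
  have eA: "(\<Sum>k\<in>{1..L}. A k * (u k)\<^sup>2) = Q n a m f"
    by (simp add: Q_def L_def A_def u_def sum_distrib_left field_simps)
  have eB: "(\<Sum>k\<in>{1..L}. B k * (u k)\<^sup>2) = Q n (a+1) m f"
    by (simp add: Q_def L_def B_def u_def sum_distrib_left field_simps)
  have eD: "(\<Sum>k\<in>{1..L-1}. D k * (d k)\<^sup>2) = Q n (a+2) (Suc m) f"
  proof -
    have "L - 1 = n + 1 - Suc m" by (simp add: L_def)
    then show ?thesis using n0
      by (simp add: Q_def D_def d_def sum_distrib_left power_divide power2_eq_square field_simps)
  qed
  show ?thesis using main unfolding eA eB eD by (simp add: M_def)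
qed



lemma hardy_half_step:
  fixes n L k M :: real
  assumes n: "n > 0" and k: "1 \<le> k" "k \<le> L" and nM: "n \<le> M * L"
  shows "1/(n* sqrt(k/n)) - 3*M*(sqrt(k/n)/n) \<le> 2* sqrt(k/n)*(1-k/L) - 2* sqrt((k-1)/n)*(1-(k-1)/L)"
proof -
  define s where "s = sqrt (k/n)"
  define t where "t = sqrt ((k-1)/n)"
  have L0: "L > 0" using k by simp
  have s0: "s > 0" using n k by (simp add: s_def)
  have t0: "t \<ge> 0" using n k by (simp add: t_def)
  have ss: "s^2 = k/n" using n k by (simp add: s_def)
  have tt: "t^2 = (k-1)/n" using n k by (simp add: t_def)
  have ts: "t \<le> s" unfolding s_def t_def using n by (intro real_sqrt_le_mono divide_right_mono) auto
  have diff: "s^2 - t^2 = 1/n" using ss tt n by (simp add: field_simps)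
  have a: "1/(n* s) \<le> 2*(s-t)"
  proof -
    have "1/n \<le> 2*(s-t)* s" using diff sum_squares_ge_zero[of "s-t" 0]
      by (simp add: power2_eq_square algebra_simps)
    then show ?thesis using s0 n by (simp add: field_simps)
  qed
  have c1: "0 \<le> 1 - k/L" using k L0 by simp
  have b: "2* s*(1-k/L) - 2*t*(1-(k-1)/L) = 2*(s-t)*(1-k/L) - 2*(t/L)"
    using L0 by (simp add: field_simps)
  have c: "1/(n* s)*(1-k/L) \<le> 2*(s-t)*(1-k/L)" using a c1 by (rule mult_right_mono)
  have d: "1/(n* s)*(k/L) = s/L"
  proof -
    have "k = n * s^2" using ss n by simp
    then show ?thesis using s0 n L0 by (simp add: power2_eq_square field_simps)
  qed
  have e: "s/L \<le> M*(s/n)"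
  proof -
    have "s*n \<le> s*(M*L)" using nM s0 by (intro mult_left_mono) auto
    then show ?thesis using n L0 by (simp add: field_simps)
  qed
  have tL: "t/L \<le> s/L" using ts L0 by (simp add: divide_right_mono)
  have f: "1/(n* s)*(1-k/L) = 1/(n* s) - 1/(n* s)*(k/L)" by (simp only: right_diff_distrib mult_1_right)
  have "2* s*(1-k/L) - 2*t*(1-(k-1)/L) \<ge> 1/(n* s) - 3*M*(s/n)"
    using b c d e tL f by linarith
  then show ?thesis by (simp add: s_def t_def)
qed

lemma sqrt_succ_le:
  assumes n: "real n > 0" and k: "k \<ge> 1"
  shows "sqrt (real (Suc k) / real n) \<le> 2 * sqrt (real k / real n)"
proof -
  have "real (Suc k) / real n \<le> 4 * (real k / real n)" using n k by (simp add: field_simps)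
  then have "sqrt (real (Suc k) / real n) \<le> sqrt (4 * (real k / real n))" by (rule real_sqrt_le_mono)
  also have "\<dots> = sqrt 4 * sqrt (real k / real n)" by (rule real_sqrt_mult)
  also have "\<dots> = 2 * sqrt (real k / real n)" by simp
  finally show ?thesis .
qed

lemma hardy_half:
  assumes n: "n \<ge> 1"
  shows "QH n m f \<le> 12 * real (m+1) * Q n 0 m f + 64 * Q n 1 (Suc m) f"
proof (cases "n + 1 - m \<ge> 1")
  case False
  then have "n + 1 - m = 0" by simp
  then have "QH n m f = 0" by (simp add: QH_def)
  then show ?thesis using Q_nonneg[of n 0 m f] Q_nonneg[of n 1 "Suc m" f] by simp
next
  case True
  define L where "L = n + 1 - m"
  have L1: "L \<ge> 1" using True by (simp add: L_def)
  define u where "u k = norm (fwdpow n m f k)" for k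
  define d where "d k = norm (fwdpow n (Suc m) f k) / real n" for k
  define A where "A k = 1 / (real n * sqrt (real k / real n))" for k
  define B where "B k = sqrt (real k / real n) / real n" for k
  define D where "D k = real n * (real k / real n) * sqrt (real k / real n)" for k
  define F where "F k = 2 * sqrt (real k / real n) * (1 - real k / real L)" for k
  define M where "M = real (m+1)"
  have n0: "real n > 0" using n by simp
  have nM: "real n \<le> M * real L" using nML[OF True] by (simp add: M_def L_def)
  have main: "(\<Sum>k\<in>{1..L}. A k * (u k)\<^sup>2) \<le> 2 * (3*M) * (\<Sum>k\<in>{1..L}. B k * (u k)\<^sup>2) + 4 * 8 * (\<Sum>k\<in>{1..L-1}. D k * (d k)\<^sup>2)"
  proof (rule hardy_abs[OF L1])
    show "\<bar>u (Suc k) - u k\<bar> \<le> d k" for k unfolding u_def d_def using ud_level[OF n] .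
    show "u k \<ge> 0" for k by (simp add: u_def)
    show "d k \<ge> 0" for k by (simp add: d_def)
    show "F 0 \<ge> 0" by (simp add: F_def)
    show "F L \<le> 0" using L1 by (simp add: F_def)
    show "A k - 3*M * B k \<le> F k - F (k-1)" if "1 \<le> k" "k \<le> L" for k
    proof -
      have rk: "real (k-1) = real k - 1" using that by simp
      show ?thesis unfolding A_def B_def F_def rk
        using hardy_half_step[of "real n" "real k" "real L" M] that n0 nM by simp
    qed
    show "A k > 0" if "1 \<le> k" "k \<le> L" for k using that n0 by (simp add: A_def)
    show "F k \<ge> 0 \<and> (F k)\<^sup>2 \<le> 8 * A k * D k \<and> (F k)\<^sup>2 \<le> 8 * A (Suc k) * D k" if "1 \<le> k" "k < L" for k
    proof -
      define s where "s = sqrt (real k / real n)"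
      define s' where "s' = sqrt (real (Suc k) / real n)"
      have s0: "s > 0" using n0 that by (simp add: s_def)
      have s'0: "s' > 0" using n0 that by (simp add: s'_def)
      have ss: "s^2 = real k / real n" using n0 by (simp add: s_def)
      have s's: "s' \<le> 2 * s" unfolding s_def s'_def using sqrt_succ_le[OF n0] that by simp
      have c: "0 \<le> 1 - real k / real L" "1 - real k / real L \<le> 1" using that by auto
      have F0: "F k \<ge> 0" using c s0 by (simp add: F_def s_def[symmetric])
      have "(F k)\<^sup>2 \<le> (2* s)\<^sup>2"
        unfolding F_def s_def[symmetric] using c s0
        by (intro power_mono) (auto intro: mult_left_le)
      also have "\<dots> = 4 * s^2" by (simp add: power2_eq_square)
      finally have f: "(F k)\<^sup>2 \<le> 4 * s^2" .
      have AD: "A k * D k = s^2" unfolding A_def D_def s_def[symmetric] using n0 s0 ss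
        by (simp add: power2_eq_square field_simps)
      have AD': "8 * A (Suc k) * D k \<ge> 4 * s^2"
      proof -
        have e1: "A (Suc k) * D k = s^2 * s / s'" unfolding A_def D_def s_def[symmetric] s'_def[symmetric]
          using n0 s0 s'0 ss by (simp add: power2_eq_square field_simps)
        have "s^2 * s' \<le> s^2 * (2 * s)" using s's by (simp add: mult_left_mono)
        then have "s^2 / 2 \<le> s^2 * s / s'" using s'0 by (simp add: field_simps)
        then have "s^2 / 2 \<le> A (Suc k) * D k" using e1 by simp
        then show ?thesis by (simp add: algebra_simps)
      qed
      have g1: "8 * A k * D k = 8 * s^2" using AD by (simp add: mult.assoc)
      have g2: "8 * A (Suc k) * D k = 4 * (2 * (D k * A (Suc k)))" by (simp add: algebra_simps)
      show ?thesis
      proof (intro conjI)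
        show "F k \<ge> 0" by (rule F0)
        show "(F k)\<^sup>2 \<le> 8 * A k * D k" using f g1 zero_le_power2[of s] by linarith
        show "(F k)\<^sup>2 \<le> 8 * A (Suc k) * D k" using f AD' by linarith
      qed
    qed
  qed
  have eA: "(\<Sum>k\<in>{1..L}. A k * (u k)\<^sup>2) = QH n m f"
    by (simp add: QH_def L_def A_def u_def sum_distrib_left field_simps)
  have xle: "real k / real n \<le> 2" if "k \<in> {1..L}" for k
  proof -
    have "k \<le> 2 * n" using that n by (simp add: L_def) linarith
    then have "real k \<le> real (2 * n)" by (simp only: of_nat_le_iff)
    then show ?thesis using n0 by (simp add: field_simps)
  qed
  have sle: "sqrt (real k / real n) \<le> 2" if "k \<in> {1..L}" for k
  proof -
    have "sqrt (real k / real n) \<le> sqrt 4" using xle[OF that] by (intro real_sqrt_le_mono) simp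
    then show ?thesis by simp
  qed
  have eB: "(\<Sum>k\<in>{1..L}. B k * (u k)\<^sup>2) \<le> 2 * Q n 0 m f"
  proof -
    have "(\<Sum>k\<in>{1..L}. B k * (u k)\<^sup>2) \<le> (\<Sum>k\<in>{1..L}. (2 / real n) * (u k)\<^sup>2)"
      unfolding B_def using sle n0 by (intro sum_mono mult_right_mono divide_right_mono) auto
    also have "\<dots> = 2 * Q n 0 m f" by (simp add: Q_def L_def u_def sum_distrib_left field_simps)
    finally show ?thesis .
  qed
  have eD: "(\<Sum>k\<in>{1..L-1}. D k * (d k)\<^sup>2) \<le> 2 * Q n 1 (Suc m) f"
  proof -
    have "(\<Sum>k\<in>{1..L-1}. D k * (d k)\<^sup>2) \<le> (\<Sum>k\<in>{1..L-1}. (real n * (real k / real n) * 2) * (d k)\<^sup>2)"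
      unfolding D_def using sle n0 by (intro sum_mono mult_right_mono mult_left_mono) auto
    also have "\<dots> = 2 * Q n 1 (Suc m) f"
    proof -
      have "L - 1 = n + 1 - Suc m" by (simp add: L_def)
      then show ?thesis using n0
        by (simp add: Q_def d_def sum_distrib_left power_divide power2_eq_square field_simps)
    qed
    finally show ?thesis .
  qed
  have M0: "M \<ge> 0" by (simp add: M_def)
  have "QH n m f \<le> 6 * M * (2 * Q n 0 m f) + 32 * (2 * Q n 1 (Suc m) f)"
  proof -
    have "6 * M * (\<Sum>k\<in>{1..L}. B k * (u k)\<^sup>2) \<le> 6 * M * (2 * Q n 0 m f)"
      using eB M0 by (intro mult_left_mono) auto
    then show ?thesis using main eD unfolding eA by linarith
  qed
  moreover have "6 * M * (2 * Q n 0 m f) = 12 * real (m+1) * Q n 0 m f" by (simp add: M_def)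
  ultimately show ?thesis by linarith
qed



lemma pow_diff_le:
  fixes x y :: real
  assumes "0 \<le> x" "x \<le> y"
  shows "y^(Suc b) - x^(Suc b) \<le> real (Suc b) * y^b * (y - x)"
proof (induction b)
  case 0 then show ?case by simp
next
  case (Suc b)
  have "y^(Suc (Suc b)) - x^(Suc (Suc b)) = y * (y^(Suc b) - x^(Suc b)) + x^(Suc b) * (y - x)"
    by (simp add: algebra_simps)
  also have "\<dots> \<le> y * (real (Suc b) * y^b * (y - x)) + y^(Suc b) * (y - x)"
    using assms Suc by (intro add_mono mult_left_mono mult_right_mono power_mono) auto
  also have "\<dots> = real (Suc (Suc b)) * y^(Suc b) * (y - x)" by (simp add: algebra_simps)
  finally show ?case .
qed

lemma xle_gen:
  assumes n: "n \<ge> 1" and k: "k \<le> n + 1 - m"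
  shows "real k / real n \<le> 2"
proof -
  have "k \<le> 2 * n" using k n by linarith
  then have "real k \<le> real (2 * n)" by (simp only: of_nat_le_iff)
  then show ?thesis using n by (simp add: field_simps)
qed

lemma sup_nat:
  assumes n: "n \<ge> 1" and k: "1 \<le> k" "k \<le> n + 1 - m"
  shows "(real k / real n)^(Suc b) * (norm (fwdpow n m f k))\<^sup>2
     \<le> (2 * real (m+1) + real b + 3) * Q n b m f + 2 * (real b + 1) * Q n (b+2) (Suc m) f"
proof -
  define L where "L = n + 1 - m"
  have L1: "L \<ge> 1" using k by (simp add: L_def)
  have True: "n + 1 - m \<ge> 1" using L1 by (simp add: L_def)
  define u where "u k = norm (fwdpow n m f k)" for k
  define d where "d k = norm (fwdpow n (Suc m) f k) / real n" for k
  define W where "W l = (real l / real n)^(Suc b)" for l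
  define G where "G l = (real l / real n)^b / real n" for l
  define E where "E l = real n * (real l / real n)^(b+2)" for l
  define C where "C = real b + 1"
  define M where "M = real (m+1)"
  have n0: "real n > 0" using n by simp
  have nM: "real n \<le> M * real L" using nML[OF True] by (simp add: M_def L_def)
  have main: "W k * (u k)\<^sup>2 \<le> (\<Sum>l\<in>{1..L}. W l * (u l)\<^sup>2) / real L + (C + 2) * (\<Sum>l\<in>{1..L}. G l * (u l)\<^sup>2)
      + 2 * C * (\<Sum>l\<in>{1..L-1}. E l * (d l)\<^sup>2)"
  proof (rule sup_abs[OF L1])
    show "1 \<le> k" "k \<le> L" using k by (auto simp: L_def)
    show "\<bar>u (Suc k) - u k\<bar> \<le> d k" for k unfolding u_def d_def using ud_level[OF n] .
    show "u k \<ge> 0" for k by (simp add: u_def)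
    show "d k \<ge> 0" for k by (simp add: d_def)
    show "C \<ge> 0" by (simp add: C_def)
    show "G l > 0" if "1 \<le> l" "l \<le> L" for l using that n0 by (simp add: G_def)
    show "W l \<ge> 0" for l by (simp add: W_def)
    show "(W l)\<^sup>2 \<le> C * G l * E l \<and> (W l)\<^sup>2 \<le> C * G (Suc l) * E l \<and> \<bar>W (Suc l) - W l\<bar> \<le> C * G (Suc l)"
      if "1 \<le> l" "l < L" for l
    proof -
      define x where "x = real l / real n"
      define x' where "x' = real (Suc l) / real n"
      have x0: "0 \<le> x" "x \<le> x'" using n0 by (auto simp: x_def x'_def divide_right_mono)
      have dx: "x' - x = 1 / real n" using n0 by (simp add: x_def x'_def field_simps)
      have C1: "C \<ge> 1" by (simp add: C_def)
      have GE: "G l * E l = (W l)\<^sup>2" using n0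
        by (simp add: G_def E_def W_def x_def[symmetric] power2_eq_square power_add field_simps)
      have GE0: "G l * E l \<ge> 0" unfolding GE by simp
      have GE': "G l * E l \<le> G (Suc l) * E l"
        unfolding G_def E_def x_def[symmetric] x'_def[symmetric] using x0 n0
        by (intro mult_right_mono divide_right_mono power_mono) auto
      have a1: "(W l)\<^sup>2 \<le> C * G l * E l"
        using mult_right_mono[OF C1 GE0] GE by (simp add: mult.assoc)
      have a2: "(W l)\<^sup>2 \<le> C * G (Suc l) * E l"
        using a1 GE' C1 by (smt (verit) mult.assoc mult_left_mono)
      have a3: "\<bar>W (Suc l) - W l\<bar> \<le> C * G (Suc l)"
      proof -
        have "W (Suc l) - W l \<le> real (Suc b) * x'^b * (x' - x)"
          unfolding W_def x_def[symmetric] x'_def[symmetric] using pow_diff_le[OF x0] .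
        also have "\<dots> = C * G (Suc l)" unfolding G_def x'_def[symmetric] dx C_def by simp
        finally have "W (Suc l) - W l \<le> C * G (Suc l)" .
        moreover have "W (Suc l) - W l \<ge> 0" unfolding W_def x_def[symmetric] x'_def[symmetric]
          using power_mono[OF x0(2) x0(1), of "Suc b"] by simp
        ultimately show ?thesis by simp
      qed
      show ?thesis using a1 a2 a3 by simp
    qed
  qed
  have eG: "(\<Sum>l\<in>{1..L}. G l * (u l)\<^sup>2) = Q n b m f"
    by (simp add: Q_def L_def G_def u_def sum_distrib_left field_simps)
  have eE: "(\<Sum>l\<in>{1..L-1}. E l * (d l)\<^sup>2) = Q n (b+2) (Suc m) f"
  proof -
    have "L - 1 = n + 1 - Suc m" by (simp add: L_def)
    then show ?thesis using n0
      by (simp add: Q_def E_def d_def sum_distrib_left power_divide power2_eq_square field_simps)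
  qed
  have eW: "(\<Sum>l\<in>{1..L}. W l * (u l)\<^sup>2) / real L \<le> 2 * M * Q n b m f"
  proof -
    have "(\<Sum>l\<in>{1..L}. W l * (u l)\<^sup>2) \<le> (\<Sum>l\<in>{1..L}. (2 * real n) * (G l * (u l)\<^sup>2))"
    proof (intro sum_mono)
      fix l assume l: "l \<in> {1..L}"
      have x2: "real l / real n \<le> 2" using xle_gen[OF n, of l m] l by (simp add: L_def)
      have "W l = (real l / real n) * (real l / real n)^b" by (simp add: W_def)
      also have "\<dots> \<le> 2 * (real l / real n)^b" using x2 by (intro mult_right_mono) auto
      also have "\<dots> = 2 * real n * G l" using n0 by (simp add: G_def)
      finally have wl: "W l \<le> 2 * real n * G l" .
      show "W l * (u l)\<^sup>2 \<le> (2 * real n) * (G l * (u l)\<^sup>2)"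
      proof -
        have "W l * (u l)\<^sup>2 \<le> (2 * real n * G l) * (u l)\<^sup>2" using wl by (rule mult_right_mono) simp
        then show ?thesis by (simp add: algebra_simps)
      qed
    qed
    also have "\<dots> = 2 * real n * Q n b m f" unfolding eG[symmetric] by (simp add: sum_distrib_left)
    finally have h: "(\<Sum>l\<in>{1..L}. W l * (u l)\<^sup>2) \<le> 2 * real n * Q n b m f" .
    have "2 * real n * Q n b m f \<le> 2 * (M * real L) * Q n b m f"
      using nM Q_nonneg[of n b m f] by (intro mult_right_mono mult_left_mono) auto
    with h have "(\<Sum>l\<in>{1..L}. W l * (u l)\<^sup>2) \<le> (2 * M * Q n b m f) * real L" by (simp add: algebra_simps)
    then show ?thesis using L1 by (simp add: divide_le_eq)
  qed
  have "W k * (u k)\<^sup>2 \<le> 2 * M * Q n b m f + (C + 2) * Q n b m f + 2 * C * Q n (b+2) (Suc m) f"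
    using main eW unfolding eG eE by linarith
  then show ?thesis by (simp add: W_def u_def M_def C_def algebra_simps)
qed

lemma sup_half:
  assumes n: "n \<ge> 1" and k: "1 \<le> k" "k \<le> n + 1 - m"
  shows "sqrt (real k / real n) * (norm (fwdpow n m f k))\<^sup>2
     \<le> (2 * real (m+1) + 4) * QH n m f + 8 * Q n 1 (Suc m) f"
proof -
  define L where "L = n + 1 - m"
  have L1: "L \<ge> 1" using k by (simp add: L_def)
  have True: "n + 1 - m \<ge> 1" using L1 by (simp add: L_def)
  define u where "u k = norm (fwdpow n m f k)" for k
  define d where "d k = norm (fwdpow n (Suc m) f k) / real n" for k
  define W where "W l = sqrt (real l / real n)" for l
  define G where "G l = 1 / (real n * sqrt (real l / real n))" for l
  define E where "E l = real n * (real l / real n) * sqrt (real l / real n)" for l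
  define M where "M = real (m+1)"
  have n0: "real n > 0" using n by simp
  have nM: "real n \<le> M * real L" using nML[OF True] by (simp add: M_def L_def)
  have main: "W k * (u k)\<^sup>2 \<le> (\<Sum>l\<in>{1..L}. W l * (u l)\<^sup>2) / real L + (2 + 2) * (\<Sum>l\<in>{1..L}. G l * (u l)\<^sup>2)
      + 2 * 2 * (\<Sum>l\<in>{1..L-1}. E l * (d l)\<^sup>2)"
  proof (rule sup_abs[OF L1])
    show "1 \<le> k" "k \<le> L" using k by (auto simp: L_def)
    show "\<bar>u (Suc k) - u k\<bar> \<le> d k" for k unfolding u_def d_def using ud_level[OF n] .
    show "u k \<ge> 0" for k by (simp add: u_def)
    show "d k \<ge> 0" for k by (simp add: d_def)
    show "(2::real) \<ge> 0" by simp
    show "G l > 0" if "1 \<le> l" "l \<le> L" for l using that n0 by (simp add: G_def)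
    show "W l \<ge> 0" for l by (simp add: W_def)
    show "(W l)\<^sup>2 \<le> 2 * G l * E l \<and> (W l)\<^sup>2 \<le> 2 * G (Suc l) * E l \<and> \<bar>W (Suc l) - W l\<bar> \<le> 2 * G (Suc l)"
      if "1 \<le> l" "l < L" for l
    proof -
      define s where "s = sqrt (real l / real n)"
      define s' where "s' = sqrt (real (Suc l) / real n)"
      have s0: "s > 0" using n0 that by (simp add: s_def)
      have s'0: "s' > 0" using n0 that by (simp add: s'_def)
      have ss: "s^2 = real l / real n" using n0 by (simp add: s_def)
      have ss': "s'^2 = real (Suc l) / real n" using n0 by (simp add: s'_def)
      have s's: "s' \<le> 2 * s" unfolding s_def s'_def using sqrt_succ_le[OF n0] that by simp
      have ss'le: "s \<le> s'" unfolding s_def s'_def using n0 by (intro real_sqrt_le_mono divide_right_mono) auto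
      have GE: "G l * E l = s^2" unfolding G_def E_def s_def[symmetric] using n0 s0 ss
        by (simp add: power2_eq_square field_simps)
      have a1: "(W l)\<^sup>2 \<le> 2 * G l * E l" using GE by (simp add: W_def s_def[symmetric] mult.assoc)
      have a2: "(W l)\<^sup>2 \<le> 2 * G (Suc l) * E l"
      proof -
        have e1: "G (Suc l) * E l = s^2 * s / s'" unfolding G_def E_def s_def[symmetric] s'_def[symmetric]
          using n0 s0 s'0 ss by (simp add: power2_eq_square field_simps)
        have "s^2 * s' \<le> s^2 * (2 * s)" using s's by (simp add: mult_left_mono)
        then have "s^2 / 2 \<le> s^2 * s / s'" using s'0 by (simp add: field_simps)
        then have "s^2 / 2 \<le> G (Suc l) * E l" using e1 by simp
        then show ?thesis by (simp add: W_def s_def[symmetric] algebra_simps)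
      qed
      have a3: "\<bar>W (Suc l) - W l\<bar> \<le> 2 * G (Suc l)"
      proof -
        have "(s' - s) * (s' + s) = 1 / real n" using ss ss' n0
          by (simp add: power2_eq_square algebra_simps field_simps)
        moreover have "(s' - s) * s' \<le> (s' - s) * (s' + s)" using ss'le s0 by (intro mult_left_mono) auto
        ultimately have "(s' - s) * s' \<le> 1 / real n" by simp
        then have "s' - s \<le> 1 / (real n * s')" using s'0 n0 by (simp add: field_simps)
        also have "\<dots> \<le> 2 * G (Suc l)"
        proof -
          have "1 / (real n * s') > 0" using s'0 n0 by simp
          moreover have aux: "\<And>z::real. z > 0 \<Longrightarrow> z \<le> 2 * z" by simp
          ultimately show ?thesis unfolding G_def s'_def[symmetric] by blast
        qed
        finally have "s' - s \<le> 2 * G (Suc l)" .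
        moreover have w: "W (Suc l) - W l = s' - s" by (simp add: W_def s_def s'_def)
        ultimately show ?thesis using ss'le by simp
      qed
      show ?thesis using a1 a2 a3 by simp
    qed
  qed
  have eG: "(\<Sum>l\<in>{1..L}. G l * (u l)\<^sup>2) = QH n m f"
    by (simp add: QH_def L_def G_def u_def sum_distrib_left field_simps)
  have sle: "sqrt (real l / real n) \<le> 2" if "l \<in> {1..L}" for l
  proof -
    have "sqrt (real l / real n) \<le> sqrt 4" using xle_gen[OF n, of l m] that
      by (intro real_sqrt_le_mono) (simp add: L_def)
    then show ?thesis by simp
  qed
  have eE: "(\<Sum>l\<in>{1..L-1}. E l * (d l)\<^sup>2) \<le> 2 * Q n 1 (Suc m) f"
  proof -
    have "(\<Sum>k\<in>{1..L-1}. E k * (d k)\<^sup>2) \<le> (\<Sum>k\<in>{1..L-1}. (real n * (real k / real n) * 2) * (d k)\<^sup>2)"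
      unfolding E_def using sle n0 by (intro sum_mono mult_right_mono mult_left_mono) auto
    also have "\<dots> = 2 * Q n 1 (Suc m) f"
    proof -
      have "L - 1 = n + 1 - Suc m" by (simp add: L_def)
      then show ?thesis using n0
        by (simp add: Q_def d_def sum_distrib_left power_divide power2_eq_square field_simps)
    qed
    finally show ?thesis .
  qed
  have eW: "(\<Sum>l\<in>{1..L}. W l * (u l)\<^sup>2) / real L \<le> 2 * M * QH n m f"
  proof -
    have "(\<Sum>l\<in>{1..L}. W l * (u l)\<^sup>2) \<le> (\<Sum>l\<in>{1..L}. (2 * real n) * (G l * (u l)\<^sup>2))"
    proof (intro sum_mono)
      fix l assume l: "l \<in> {1..L}"
      define s where "s = sqrt (real l / real n)"
      have s0: "s > 0" using n0 l by (simp add: s_def)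
      have ss: "s^2 \<le> 2" using xle_gen[OF n, of l m] l n0 by (simp add: s_def L_def)
      have wl: "W l \<le> 2 * real n * G l"
        unfolding W_def G_def s_def[symmetric] using s0 n0 ss by (simp add: power2_eq_square field_simps)
      show "W l * (u l)\<^sup>2 \<le> (2 * real n) * (G l * (u l)\<^sup>2)"
      proof -
        have "W l * (u l)\<^sup>2 \<le> (2 * real n * G l) * (u l)\<^sup>2" using wl by (rule mult_right_mono) simp
        then show ?thesis by (simp add: algebra_simps)
      qed
    qed
    also have "\<dots> = 2 * real n * QH n m f" unfolding eG[symmetric] by (simp add: sum_distrib_left)
    finally have h: "(\<Sum>l\<in>{1..L}. W l * (u l)\<^sup>2) \<le> 2 * real n * QH n m f" .
    have "2 * real n * QH n m f \<le> 2 * (M * real L) * QH n m f"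
      using nM QH_nonneg[of n m f] by (intro mult_right_mono mult_left_mono) auto
    with h have "(\<Sum>l\<in>{1..L}. W l * (u l)\<^sup>2) \<le> (2 * M * QH n m f) * real L" by (simp add: algebra_simps)
    then show ?thesis using L1 by (simp add: divide_le_eq)
  qed
  have "W k * (u k)\<^sup>2 \<le> 2 * M * QH n m f + 4 * QH n m f + 4 * (2 * Q n 1 (Suc m) f)"
  proof -
    have m': "W k * (u k)\<^sup>2 \<le> (\<Sum>l\<in>{1..L}. W l * (u l)\<^sup>2) / real L + 4 * QH n m f + 4 * (\<Sum>l\<in>{1..L-1}. E l * (d l)\<^sup>2)"
      using main unfolding eG by simp
    have "4 * (\<Sum>l\<in>{1..L-1}. E l * (d l)\<^sup>2) \<le> 4 * (2 * Q n 1 (Suc m) f)" using eE by simp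
    then show ?thesis using m' eW by linarith
  qed
  then show ?thesis by (simp add: W_def u_def M_def algebra_simps)
qed



lemma sub_sum:
  assumes "1 \<le> lo" "hi \<le> M"
  shows "(\<Sum>l\<in>{lo..hi}. Q n l l f) \<le> (\<Sum>l\<in>{1..M}. Q n l l f)"
  using assms by (intro sum_mono2) (auto intro: Q_nonneg)

lemma chain:
  "j \<le> m \<Longrightarrow> \<exists>C\<ge>0. \<forall>n (f::nat \<Rightarrow> 'a::real_normed_vector). n \<ge> 1 \<longrightarrow>
      Q n (m-j) m f \<le> C * (\<Sum>l\<in>{m..m+j}. Q n l l f)"
proof (induction j arbitrary: m)
  case 0
  show ?case by (rule exI[of _ 1]) simp
next
  case (Suc j)
  obtain C1 where C1: "C1 \<ge> 0" "\<forall>n (f::nat \<Rightarrow> 'a). n \<ge> 1 \<longrightarrow> Q n (m-j) m f \<le> C1 * (\<Sum>l\<in>{m..m+j}. Q n l l f)"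
    using Suc.IH[of m] Suc.prems by auto
  obtain C2 where C2: "C2 \<ge> 0" "\<forall>n (f::nat \<Rightarrow> 'a). n \<ge> 1 \<longrightarrow> Q n (Suc m-j) (Suc m) f \<le> C2 * (\<Sum>l\<in>{Suc m..Suc m+j}. Q n l l f)"
    using Suc.IH[of "Suc m"] Suc.prems by auto
  show ?case
  proof (rule exI[of _ "4 * real (m+1) * C1 + 4 * C2"], intro conjI allI impI)
    show "4 * real (m+1) * C1 + 4 * C2 \<ge> 0" using C1 C2 by simp
    fix n :: nat and f :: "nat \<Rightarrow> 'a" assume n: "n \<ge> 1"
    let ?S = "\<Sum>l\<in>{m..m+Suc j}. Q n l l f"
    have S1: "(\<Sum>l\<in>{m..m+j}. Q n l l f) \<le> ?S" by (intro sum_mono2) (auto intro: Q_nonneg)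
    have S2: "(\<Sum>l\<in>{Suc m..Suc m+j}. Q n l l f) \<le> ?S" by (intro sum_mono2) (auto intro: Q_nonneg)
    have h: "Q n (m - Suc j) m f \<le> 4 * real (m+1) * Q n (m - Suc j + 1) m f + 4 * Q n (m - Suc j + 2) (Suc m) f"
      by (rule hardy_nat[OF n])
    have e1: "m - Suc j + 1 = m - j" "m - Suc j + 2 = Suc m - j" using Suc.prems by auto
    have "Q n (m - j) m f \<le> C1 * ?S"
      using C1(2) n S1 C1(1) by (meson mult_left_mono order_trans)
    moreover have "Q n (Suc m - j) (Suc m) f \<le> C2 * ?S"
      using C2(2) n S2 C2(1) by (meson mult_left_mono order_trans)
    ultimately have "4 * real (m+1) * Q n (m - j) m f + 4 * Q n (Suc m - j) (Suc m) f
        \<le> 4 * real (m+1) * (C1 * ?S) + 4 * (C2 * ?S)"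
      by (intro add_mono mult_left_mono) auto
    then show "Q n (m - Suc j) m f \<le> (4 * real (m+1) * C1 + 4 * C2) * ?S"
      using h unfolding e1 by (simp add: algebra_simps)
  qed
qed

lemma sw_nat_nonneg: "n \<ge> 1 \<Longrightarrow> k \<ge> 1 \<Longrightarrow> sw n (real l) k \<ge> 0"
  using sw_nat_bounds(1)[of n k l] by (meson order_trans zero_le_divide_iff zero_le_power of_nat_0_le_iff)

lemma energy_etad:
  assumes n: "n \<ge> 1"
  shows "(\<Sum>l\<in>{1..M}. Q n l l etad) \<le> energy n M eta etad"
proof -
  define T1 where "T1 l k = sw n (real l) k * (norm (fwdpow n l etad k))\<^sup>2" for l k
  define T2 where "T2 l k = sw n (real l + 1) k * (norm (fwdpow n (Suc l) eta k))\<^sup>2" for l k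
  have T1n: "T1 l k \<ge> 0" if "k \<ge> 1" for l k using sw_nat_nonneg[OF n that] by (simp add: T1_def)
  have T2n: "T2 l k \<ge> 0" if "k \<ge> 1" for l k using sw_nat_nonneg[OF n that, of "Suc l"] by (simp add: T2_def add.commute)
  have step: "Q n l l etad \<le> (1 / real n) * (\<Sum>k\<in>{1..n - l div 2}. T1 l k)" if l: "l \<ge> 1" for l
  proof -
    have "(\<Sum>k\<in>{1..n+1-l}. (real k / real n) ^ l * (norm (fwdpow n l etad k))\<^sup>2) \<le> (\<Sum>k\<in>{1..n+1-l}. T1 l k)"
      unfolding T1_def using sw_nat_bounds(1)[OF n] by (intro sum_mono mult_right_mono) auto
    also have "\<dots> \<le> (\<Sum>k\<in>{1..n - l div 2}. T1 l k)"
      using l T1n by (intro sum_mono2) auto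
    finally show ?thesis unfolding Q_def by (intro mult_left_mono) auto
  qed
  have "(\<Sum>l\<in>{1..M}. Q n l l etad) \<le> (\<Sum>l\<in>{1..M}. (1 / real n) * (\<Sum>k\<in>{1..n - l div 2}. T1 l k))"
    using step by (intro sum_mono) auto
  also have "\<dots> \<le> (\<Sum>l\<in>{..M}. (1 / real n) * (\<Sum>k\<in>{1..n - l div 2}. T1 l k))"
    using T1n by (intro sum_mono2) (auto intro!: divide_nonneg_nonneg sum_nonneg)
  also have "\<dots> \<le> (\<Sum>l\<in>{..M}. (1 / real n) * (\<Sum>k\<in>{1..n - l div 2}. T1 l k + T2 l k))"
    using T2n by (intro sum_mono mult_left_mono) (auto intro: add_increasing2)
  also have "\<dots> = energy n M eta etad"
    unfolding energy_def T1_def T2_def by (simp add: sum_distrib_left)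
  finally show ?thesis .
qed

lemma energy_eta:
  assumes n: "n \<ge> 1"
  shows "(\<Sum>l\<in>{1..Suc M}. Q n l l eta) \<le> energy n M eta etad"
proof -
  define T1 where "T1 l k = sw n (real l) k * (norm (fwdpow n l etad k))\<^sup>2" for l k
  define T2 where "T2 l k = sw n (real l + 1) k * (norm (fwdpow n (Suc l) eta k))\<^sup>2" for l k
  have T1n: "T1 l k \<ge> 0" if "k \<ge> 1" for l k using sw_nat_nonneg[OF n that] by (simp add: T1_def)
  have T2n: "T2 l k \<ge> 0" if "k \<ge> 1" for l k using sw_nat_nonneg[OF n that, of "Suc l"] by (simp add: T2_def add.commute)
  have step: "Q n (Suc l) (Suc l) eta \<le> (1 / real n) * (\<Sum>k\<in>{1..n - l div 2}. T2 l k)" for l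
  proof -
    have "(\<Sum>k\<in>{1..n+1-Suc l}. (real k / real n) ^ Suc l * (norm (fwdpow n (Suc l) eta k))\<^sup>2) \<le> (\<Sum>k\<in>{1..n+1-Suc l}. T2 l k)"
      unfolding T2_def using sw_nat_bounds(1)[OF n, of _ "Suc l"] by (intro sum_mono mult_right_mono) (auto simp: add.commute)
    also have "\<dots> \<le> (\<Sum>k\<in>{1..n - l div 2}. T2 l k)"
      using T2n by (intro sum_mono2) auto
    finally show ?thesis unfolding Q_def by (intro mult_left_mono) auto
  qed
  have "(\<Sum>l\<in>{1..Suc M}. Q n l l eta) = (\<Sum>l\<in>{0..M}. Q n (Suc l) (Suc l) eta)"
    using sum.shift_bounds_cl_Suc_ivl[of "\<lambda>l. Q n l l eta" 0 M] by simp
  also have "\<dots> \<le> (\<Sum>l\<in>{0..M}. (1 / real n) * (\<Sum>k\<in>{1..n - l div 2}. T2 l k))"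
    using step by (intro sum_mono) auto
  also have "\<dots> \<le> (\<Sum>l\<in>{..M}. (1 / real n) * (\<Sum>k\<in>{1..n - l div 2}. T1 l k + T2 l k))"
    unfolding atLeast0AtMost using T1n by (intro sum_mono mult_left_mono) (auto intro: add_increasing)
  also have "\<dots> = energy n M eta etad"
    unfolding energy_def T1_def T2_def by (simp add: sum_distrib_left)
  finally show ?thesis .
qed

lemma snorm_le:
  assumes n: "n \<ge> 1"
  shows "snorm2 n (real r) m f \<le> fact r * Q n r m f"
proof -
  have "(\<Sum>k\<in>{1..n+1-m}. sw n (real r) k * (norm (fwdpow n m f k))\<^sup>2)
     \<le> (\<Sum>k\<in>{1..n+1-m}. fact r * ((real k / real n) ^ r * (norm (fwdpow n m f k))\<^sup>2))"
    using sw_nat_bounds(2)[OF n] by (intro sum_mono) (auto simp: mult.assoc[symmetric] intro: mult_right_mono)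
  then show ?thesis unfolding snorm2_def Q_def
    by (simp add: sum_distrib_left[symmetric] mult.left_commute divide_right_mono)
qed

lemma supnorm_le:
  assumes "X \<ge> 0" "\<And>k. 1 \<le> k \<Longrightarrow> k \<le> n + 1 - m \<Longrightarrow> sw n r k * (norm (fwdpow n m f k))\<^sup>2 \<le> X"
  shows "supnorm2 n r m f \<le> X"
  unfolding supnorm2_def using assms by (auto simp: Max_le_iff)



lemma comb2:
  fixes A p q Q1 Q2 c d S1 S2 S :: real
  assumes "A \<le> p * Q1 + q * Q2" "Q1 \<le> c * S1" "Q2 \<le> d * S2" "S1 \<le> S" "S2 \<le> S"
    "p \<ge> 0" "q \<ge> 0" "c \<ge> 0" "d \<ge> 0"
  shows "A \<le> (p * c + q * d) * S"
proof -
  have "p * Q1 \<le> p * (c * S)" using assms by (meson mult_left_mono order_trans)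
  moreover have "q * Q2 \<le> q * (d * S)" using assms by (meson mult_left_mono order_trans)
  ultimately show ?thesis using assms(1) by (simp add: algebra_simps)
qed

lemma le_C:
  fixes X K C e :: real
  assumes "X \<le> K * e" "K \<le> C" "e \<ge> 0"
  shows "X \<le> C * e"
  using assms by (meson mult_right_mono order_trans)

theorem lemma4p7:
  fixes i j :: nat
  assumes "1 \<le> i" and "j < i"
  shows "\<exists>C::real. \<forall>n::nat. \<forall>eta etad :: nat \<Rightarrow> 'a::euclidean_space.
    1 \<le> n \<longrightarrow> admissible n eta \<longrightarrow> admissible n etad \<longrightarrow>
      snorm2 n (real (i - j)) i eta \<le> C * energy n (i + j - 1) eta etad
    \<and> snorm2 n (real (i - j)) i etad \<le> C * energy n (i + j) eta etad
    \<and> supnorm2 n (real (i - j)) i eta \<le> C * energy n (i + j) eta etad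
    \<and> supnorm2 n (real (i - j)) i etad \<le> C * energy n (i + j + 1) eta etad
    \<and> supnorm2 n (1/2) i etad \<le> C * energy n (2 * i + 1) eta etad"
proof -
  define a where "a = i - j"
  have a1: "a \<ge> 1" using assms by (simp add: a_def)
  obtain c1 where c1: "c1 \<ge> 0" "\<forall>n (f::nat\<Rightarrow>'a). n \<ge> 1 \<longrightarrow> Q n (i-j) i f \<le> c1 * (\<Sum>l\<in>{i..i+j}. Q n l l f)"
    using chain[of j i] assms(2) by auto
  obtain c2 where c2: "c2 \<ge> 0" "\<forall>n (f::nat\<Rightarrow>'a). n \<ge> 1 \<longrightarrow> Q n (i-Suc j) i f \<le> c2 * (\<Sum>l\<in>{i..i+Suc j}. Q n l l f)"
    using chain[of "Suc j" i] assms(2) by auto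
  obtain c3 where c3: "c3 \<ge> 0" "\<forall>n (f::nat\<Rightarrow>'a). n \<ge> 1 \<longrightarrow> Q n (Suc i-j) (Suc i) f \<le> c3 * (\<Sum>l\<in>{Suc i..Suc i+j}. Q n l l f)"
    using chain[of j "Suc i"] assms(2) by auto
  obtain c4 where c4: "c4 \<ge> 0" "\<forall>n (f::nat\<Rightarrow>'a). n \<ge> 1 \<longrightarrow> Q n (i-i) i f \<le> c4 * (\<Sum>l\<in>{i..i+i}. Q n l l f)"
    using chain[of i i] by auto
  obtain c5 where c5: "c5 \<ge> 0" "\<forall>n (f::nat\<Rightarrow>'a). n \<ge> 1 \<longrightarrow> Q n (Suc i-i) (Suc i) f \<le> c5 * (\<Sum>l\<in>{Suc i..Suc i+i}. Q n l l f)"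
    using chain[of i "Suc i"] by auto
  define K1 where "K1 = fact a * c1"
  define p3 where "p3 = 2 * real (i+1) + real (a-1) + 3"
  define q3 where "q3 = 2 * (real (a-1) + 1)"
  define K3 where "K3 = fact a * (p3 * c2 + q3 * c3)"
  define p5 where "p5 = 2 * real (i+1) + 4"
  define K5 where "K5 = (p5 * 12 * real (i+1)) * c4 + (p5 * 64 + 8) * c5"
  have K1: "K1 \<ge> 0" using c1 by (simp add: K1_def)
  have K3: "K3 \<ge> 0" using c2 c3 by (simp add: K3_def p3_def q3_def)
  have K5: "K5 \<ge> 0" using c4 c5 by (simp add: K5_def p5_def)
  show ?thesis
  proof (rule exI[of _ "K1 + K3 + K5"], intro allI impI)
    fix n :: nat and eta etad :: "nat \<Rightarrow> 'a"
    assume n: "1 \<le> n"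
    have P1: "snorm2 n (real (i-j)) i f \<le> K1 * E" if E: "(\<Sum>l\<in>{1..i+j}. Q n l l f) \<le> E" for f :: "nat \<Rightarrow> 'a" and E
    proof -
      have "snorm2 n (real (i-j)) i f \<le> fact a * Q n (i-j) i f" using snorm_le[OF n] by (simp add: a_def)
      also have "\<dots> \<le> fact a * (c1 * (\<Sum>l\<in>{i..i+j}. Q n l l f))" using c1 n by (intro mult_left_mono) auto
      also have "\<dots> \<le> fact a * (c1 * E)"
        using sub_sum[of i "i+j" "i+j" n f] assms E c1 by (intro mult_left_mono) auto
      finally show ?thesis by (simp add: K1_def)
    qed
    have P3: "supnorm2 n (real (i-j)) i f \<le> K3 * E" if E: "(\<Sum>l\<in>{1..Suc (i+j)}. Q n l l f) \<le> E" for f :: "nat \<Rightarrow> 'a" and E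
    proof (rule supnorm_le)
      have "(\<Sum>l\<in>{1..Suc (i+j)}. Q n l l f) \<ge> 0" by (intro sum_nonneg) (simp add: Q_nonneg)
      then have E0: "E \<ge> 0" using E by linarith
      show "K3 * E \<ge> 0" using K3 E0 by simp
      fix k assume k: "1 \<le> k" "k \<le> n + 1 - i"
      have sA: "Suc (a-1) = a" using a1 by simp
      have "sw n (real (i-j)) k * (norm (fwdpow n i f k))\<^sup>2 \<le> fact a * ((real k / real n)^a * (norm (fwdpow n i f k))\<^sup>2)"
        using sw_nat_bounds(2)[OF n k(1), of a] by (simp add: a_def mult.assoc[symmetric] mult_right_mono)
      also have "(real k / real n)^a * (norm (fwdpow n i f k))\<^sup>2 \<le> (p3 * c2 + q3 * c3) * E"
      proof (rule comb2)
        show "(real k / real n)^a * (norm (fwdpow n i f k))\<^sup>2 \<le> p3 * Q n (a-1) i f + q3 * Q n (a-1+2) (Suc i) f"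
          using sup_nat[OF n k, of "a-1" f] unfolding sA by (simp add: p3_def q3_def)
        show "Q n (a-1) i f \<le> c2 * (\<Sum>l\<in>{i..i+Suc j}. Q n l l f)"
          using c2 n by (simp add: a_def)
        show "Q n (a-1+2) (Suc i) f \<le> c3 * (\<Sum>l\<in>{Suc i..Suc i+j}. Q n l l f)"
        proof -
          have "a - 1 + 2 = Suc i - j" using assms by (simp add: a_def)
          then show ?thesis using c3 n by simp
        qed
        show "(\<Sum>l\<in>{i..i+Suc j}. Q n l l f) \<le> E" using sub_sum[of i "i + Suc j" "Suc (i+j)" n f] assms E by simp
        show "(\<Sum>l\<in>{Suc i..Suc i+j}. Q n l l f) \<le> E" using sub_sum[of "Suc i" "Suc i + j" "Suc (i+j)" n f] E by simp
        show "p3 \<ge> 0" "q3 \<ge> 0" "c2 \<ge> 0" "c3 \<ge> 0" using c2 c3 by (auto simp: p3_def q3_def)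
      qed
      finally show "sw n (real (i-j)) k * (norm (fwdpow n i f k))\<^sup>2 \<le> K3 * E"
        by (simp add: K3_def mult.assoc)
    qed
    have P5: "supnorm2 n (1/2) i f \<le> K5 * E" if E: "(\<Sum>l\<in>{1..Suc (2*i)}. Q n l l f) \<le> E" for f :: "nat \<Rightarrow> 'a" and E
    proof (rule supnorm_le)
      have "(\<Sum>l\<in>{1..Suc (2*i)}. Q n l l f) \<ge> 0" by (intro sum_nonneg) (simp add: Q_nonneg)
      then have E0: "E \<ge> 0" using E by linarith
      show "K5 * E \<ge> 0" using K5 E0 by simp
      fix k assume k: "1 \<le> k" "k \<le> n + 1 - i"
      have "sw n (1/2) k * (norm (fwdpow n i f k))\<^sup>2 \<le> sqrt (real k / real n) * (norm (fwdpow n i f k))\<^sup>2"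
        using sw_half[OF n k(1)] by (simp add: mult_right_mono)
      also have "\<dots> \<le> p5 * QH n i f + 8 * Q n 1 (Suc i) f"
        using sup_half[OF n k, of f] by (simp add: p5_def)
      also have "\<dots> \<le> (p5 * 12 * real (i+1)) * Q n 0 i f + (p5 * 64 + 8) * Q n 1 (Suc i) f"
      proof -
        have "p5 * QH n i f \<le> p5 * (12 * real (i+1) * Q n 0 i f + 64 * Q n 1 (Suc i) f)"
          using hardy_half[OF n, of i f] by (intro mult_left_mono) (auto simp: p5_def)
        then show ?thesis by (simp add: algebra_simps)
      qed
      also have "\<dots> \<le> ((p5 * 12 * real (i+1)) * c4 + (p5 * 64 + 8) * c5) * E"
      proof (rule comb2[OF order_refl])
        show "Q n 0 i f \<le> c4 * (\<Sum>l\<in>{i..i+i}. Q n l l f)" using c4 n by simp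
        show "Q n 1 (Suc i) f \<le> c5 * (\<Sum>l\<in>{Suc i..Suc i+i}. Q n l l f)" using c5 n by simp
        show "(\<Sum>l\<in>{i..i+i}. Q n l l f) \<le> E" using sub_sum[of i "i + i" "Suc (2*i)" n f] assms E by simp
        show "(\<Sum>l\<in>{Suc i..Suc i+i}. Q n l l f) \<le> E" using sub_sum[of "Suc i" "Suc i + i" "Suc (2*i)" n f] E by simp
        show "p5 * 12 * real (i+1) \<ge> 0" "p5 * 64 + 8 \<ge> 0" "c4 \<ge> 0" "c5 \<ge> 0" using c4 c5 by (auto simp: p5_def)
      qed
      finally show "sw n (1/2) k * (norm (fwdpow n i f k))\<^sup>2 \<le> K5 * E" by (simp add: K5_def)
    qed
    have en: "energy n M eta etad \<ge> 0" for M
    proof -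
      have "(\<Sum>l\<in>{1..Suc M}. Q n l l eta) \<ge> 0" by (intro sum_nonneg) (simp add: Q_nonneg)
      then show ?thesis using energy_eta[OF n, where M=M and eta=eta and etad=etad] by linarith
    qed
    have CK1: "K1 \<le> K1 + K3 + K5" and CK3: "K3 \<le> K1 + K3 + K5" and CK5: "K5 \<le> K1 + K3 + K5"
      using K1 K3 K5 by auto
    have e1: "Suc (i + j - 1) = i + j" using assms by simp
    show "snorm2 n (real (i - j)) i eta \<le> (K1 + K3 + K5) * energy n (i + j - 1) eta etad
    \<and> snorm2 n (real (i - j)) i etad \<le> (K1 + K3 + K5) * energy n (i + j) eta etad
    \<and> supnorm2 n (real (i - j)) i eta \<le> (K1 + K3 + K5) * energy n (i + j) eta etad
    \<and> supnorm2 n (real (i - j)) i etad \<le> (K1 + K3 + K5) * energy n (i + j + 1) eta etad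
    \<and> supnorm2 n (1/2) i etad \<le> (K1 + K3 + K5) * energy n (2 * i + 1) eta etad"
    proof (intro conjI)
      have f1: "(\<Sum>l\<in>{1..i+j}. Q n l l eta) \<le> energy n (i+j-1) eta etad"
        using energy_eta[OF n, where M="i+j-1" and eta=eta and etad=etad] unfolding e1 .
      show "snorm2 n (real (i - j)) i eta \<le> (K1 + K3 + K5) * energy n (i + j - 1) eta etad"
        by (rule le_C[OF P1[OF f1] CK1 en])
      have f2: "(\<Sum>l\<in>{1..i+j}. Q n l l etad) \<le> energy n (i+j) eta etad"
        using energy_etad[OF n, where M="i+j" and eta=eta and etad=etad] .
      show "snorm2 n (real (i - j)) i etad \<le> (K1 + K3 + K5) * energy n (i + j) eta etad"
        by (rule le_C[OF P1[OF f2] CK1 en])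
      have f3: "(\<Sum>l\<in>{1..Suc (i+j)}. Q n l l eta) \<le> energy n (i+j) eta etad"
        using energy_eta[OF n, where M="i+j" and eta=eta and etad=etad] .
      show "supnorm2 n (real (i - j)) i eta \<le> (K1 + K3 + K5) * energy n (i + j) eta etad"
        by (rule le_C[OF P3[OF f3] CK3 en])
      have e4: "i + j + 1 = Suc (i+j)" by simp
      have f4: "(\<Sum>l\<in>{1..Suc (i+j)}. Q n l l etad) \<le> energy n (i+j+1) eta etad"
        using energy_etad[OF n, where M="i+j+1" and eta=eta and etad=etad] unfolding e4 .
      show "supnorm2 n (real (i - j)) i etad \<le> (K1 + K3 + K5) * energy n (i + j + 1) eta etad"
        by (rule le_C[OF P3[OF f4] CK3 en])
      have e5: "2 * i + 1 = Suc (2*i)" by simp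
      have f5: "(\<Sum>l\<in>{1..Suc (2*i)}. Q n l l etad) \<le> energy n (2*i+1) eta etad"
        using energy_etad[OF n, where M="2*i+1" and eta=eta and etad=etad] unfolding e5 .
      show "supnorm2 n (1/2) i etad \<le> (K1 + K3 + K5) * energy n (2 * i + 1) eta etad"
        by (rule le_C[OF P5[OF f5] CK5 en])
    qed
  qed
qed


end
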